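(* Let $w\in W$. Then (a) $\langle w\cdot 0,\alpha_0^\vee\rangle\geq -2(h-1)$; and (b) $\langle w\cdot 0,\alpha^\vee\rangle\leq h-2$ for every simple root $\alpha\in S$.
   Context: $R$ is an irreducible root system with positive roots $R^+$, simple roots $S$, Weyl group $W$; the inner product is normalized so that short roots $\alpha$ satisfy $\langle\alpha,\alpha\rangle=2$, and $\alpha^\vee=2\alpha/\langle\alpha,\alpha\rangle$. $\rho$ is half the sum of the positive roots, $\alpha_0$ is the highest short root, $h=\langle\rho,\alpha_0^\vee\rangle+1$ is the Coxeter number, and the dot action is $w\cdot\lambda=w(\lambda+\rho)-\rho$. *)

theory Defs
  imports "HOL-Analysis.Analysis"
begin

definition coroot :: "'a::real_inner \<Rightarrow> 'a" where
  "coroot a = (2 / (a \<bullet> a)) *\<^sub>R a"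

definition refl :: "'a::real_inner \<Rightarrow> 'a \<Rightarrow> 'a" where
  "refl a v = v - (v \<bullet> coroot a) *\<^sub>R a"

definition root_system :: "'a::euclidean_space set \<Rightarrow> bool" where
  "root_system R \<longleftrightarrow> finite R \<and> 0 \<notin> R \<and> span R = UNIV \<and>
     (\<forall>a\<in>R. \<forall>b\<in>R. refl a b \<in> R) \<and>
     (\<forall>a\<in>R. \<forall>b\<in>R. b \<bullet> coroot a \<in> \<int>) \<and>
     (\<forall>a\<in>R. \<forall>c::real. c *\<^sub>R a \<in> R \<longrightarrow> c = 1 \<or> c = -1)"

definition irreducible_root_system :: "'a::euclidean_space set \<Rightarrow> bool" where
  "irreducible_root_system R \<longleftrightarrow> root_system R \<and>
     \<not> (\<exists>A. A \<subseteq> R \<and> A \<noteq> {} \<and> A \<noteq> R \<and> (\<forall>a\<in>A. \<forall>b\<in>R - A. a \<bullet> b = 0))"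

definition nonneg_int_comb :: "'a::real_vector set \<Rightarrow> 'a \<Rightarrow> bool" where
  "nonneg_int_comb S v \<longleftrightarrow>
     (\<exists>c. (\<forall>s\<in>S. c s \<in> \<int> \<and> c s \<ge> 0) \<and> v = (\<Sum>s\<in>S. c s *\<^sub>R s))"

definition simple_roots :: "'a::euclidean_space set \<Rightarrow> 'a set \<Rightarrow> bool" where
  "simple_roots R S \<longleftrightarrow> S \<subseteq> R \<and> independent S \<and>
     (\<forall>a\<in>R. nonneg_int_comb S a \<or> nonneg_int_comb S (- a))"

definition pos_roots :: "'a::euclidean_space set \<Rightarrow> 'a set \<Rightarrow> 'a set" where
  "pos_roots R S = {a \<in> R. nonneg_int_comb S a}"

definition rho :: "'a::euclidean_space set \<Rightarrow> 'a set \<Rightarrow> 'a" where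
  "rho R S = (1/2) *\<^sub>R (\<Sum>a\<in>pos_roots R S. a)"

definition short_root :: "'a::euclidean_space set \<Rightarrow> 'a \<Rightarrow> bool" where
  "short_root R a \<longleftrightarrow> a \<in> R \<and> (\<forall>b\<in>R. a \<bullet> a \<le> b \<bullet> b)"

definition normalized_roots :: "'a::euclidean_space set \<Rightarrow> bool" where
  "normalized_roots R \<longleftrightarrow> (\<forall>a. short_root R a \<longrightarrow> a \<bullet> a = 2)"

definition highest_short_root :: "'a::euclidean_space set \<Rightarrow> 'a set \<Rightarrow> 'a \<Rightarrow> bool" where
  "highest_short_root R S a0 \<longleftrightarrow> short_root R a0 \<and>
     (\<forall>b. short_root R b \<longrightarrow> nonneg_int_comb S (a0 - b))"

inductive_set weyl_group :: "'a::euclidean_space set \<Rightarrow> ('a \<Rightarrow> 'a) set" for R where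
  weyl_id: "id \<in> weyl_group R"
| weyl_step: "w \<in> weyl_group R \<Longrightarrow> a \<in> R \<Longrightarrow> refl a \<circ> w \<in> weyl_group R"

definition coxeter_number :: "'a::euclidean_space set \<Rightarrow> 'a set \<Rightarrow> 'a \<Rightarrow> real" where
  "coxeter_number R S a0 = rho R S \<bullet> coroot a0 + 1"

definition dot_action :: "'a::euclidean_space set \<Rightarrow> 'a set \<Rightarrow> ('a \<Rightarrow> 'a) \<Rightarrow> 'a \<Rightarrow> 'a" where
  "dot_action R S w lam = w (lam + rho R S) - rho R S"

end

theory Submission imports Defs begin

lemma coroot_inner: "x \<bullet> coroot a = 2 * (x \<bullet> a) / (a \<bullet> a)"
  by (simp add: coroot_def)

lemma refl_sym: "refl a x \<bullet> y = x \<bullet> refl a y"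
  by (simp add: refl_def coroot_def inner_diff_left inner_diff_right algebra_simps inner_commute)

lemma refl_isom:
  fixes a :: "'a::real_inner"
  assumes "a \<noteq> 0" shows "refl a x \<bullet> refl a y = x \<bullet> y"
proof -
  have aa: "a \<bullet> a \<noteq> 0" using assms by simp
  show ?thesis using aa
    by (simp add: refl_def coroot_def inner_diff_left inner_diff_right inner_commute field_simps)
qed

lemma refl_coroot:
  fixes a :: "'a::real_inner"
  assumes "a \<noteq> 0" shows "refl a v \<bullet> coroot a = - (v \<bullet> coroot a)"
  using assms by (simp add: refl_def coroot_def inner_diff_left field_simps)

lemma self_coroot:
  fixes a :: "'a::real_inner"
  assumes "a \<noteq> 0" shows "a \<bullet> coroot a = 2"
  using assms by (simp add: coroot_def)

lemma refl_refl:
  fixes a :: "'a::real_inner"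
  assumes "a \<noteq> 0" shows "refl a (refl a v) = v"
proof -
  have "refl a (refl a v) = refl a v - (refl a v \<bullet> coroot a) *\<^sub>R a" by (simp add: refl_def)
  also have "\<dots> = v" using refl_coroot[OF assms, of v] by (simp add: refl_def)
  finally show ?thesis .
qed

lemma refl_self:
  fixes a :: "'a::real_inner"
  assumes "a \<noteq> 0" shows "refl a a = - a"
  using assms by (simp add: refl_def self_coroot scaleR_2)

lemma coef_unique:
  fixes S :: "'a::euclidean_space set"
  assumes "independent S" "(\<Sum>s\<in>S. c s *\<^sub>R s) = (\<Sum>s\<in>S. d s *\<^sub>R s)" "t \<in> S"
  shows "c t = d t"
proof -
  have "(\<Sum>s\<in>S. (c s - d s) *\<^sub>R s) = 0"
    using assms(2) by (simp add: scaleR_diff_left sum_subtractf)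
  then show ?thesis using assms(1,3) unfolding independent_explicit by fastforce
qed

lemma sum_delta_scaleR:
  fixes S :: "'a::real_vector set"
  assumes "finite S" "t \<in> S"
  shows "(\<Sum>s\<in>S. (if s = t then n else 0) *\<^sub>R s) = n *\<^sub>R t"
proof -
  have "(\<Sum>s\<in>S. (if s = t then n else 0) *\<^sub>R s) = (\<Sum>s\<in>S. if s = t then n *\<^sub>R s else 0)"
    by (rule sum.cong) auto
  also have "\<dots> = n *\<^sub>R t" using assms by (simp add: sum.delta')
  finally show ?thesis .
qed

lemma weyl_adj:
  assumes "root_system R" "w \<in> weyl_group R"
  shows "\<forall>y\<in>R. \<exists>z\<in>R. z \<bullet> z = y \<bullet> y \<and> (\<forall>x. w x \<bullet> y = x \<bullet> z)"
  using assms(2)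
proof induction
  case weyl_id then show ?case by auto
next
  case (weyl_step w a)
  show ?case
  proof
    fix y assume y: "y \<in> R"
    have a0: "a \<noteq> 0" using assms(1) weyl_step.hyps(2) unfolding root_system_def by auto
    have y': "refl a y \<in> R" using assms(1) weyl_step.hyps(2) y unfolding root_system_def by auto
    then obtain z where z: "z \<in> R" "z \<bullet> z = refl a y \<bullet> refl a y" "\<forall>x. w x \<bullet> refl a y = x \<bullet> z"
      using weyl_step.IH by blast
    show "\<exists>z\<in>R. z \<bullet> z = y \<bullet> y \<and> (\<forall>x. (refl a \<circ> w) x \<bullet> y = x \<bullet> z)"
      using z refl_isom[OF a0] refl_sym[of a "w _" y] by (intro bexI[of _ z]) auto
  qed
qed

locale RS =
  fixes R S :: "'a::euclidean_space set"
  assumes irr: "irreducible_root_system R" and sr: "simple_roots R S" and nr: "normalized_roots R"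
begin

lemma rs: "root_system R" using irr unfolding irreducible_root_system_def by auto
lemma finR: "finite R" using rs unfolding root_system_def by auto
lemma nz: "a \<in> R \<Longrightarrow> a \<noteq> 0" using rs unfolding root_system_def by auto
lemma reflR: "a \<in> R \<Longrightarrow> b \<in> R \<Longrightarrow> refl a b \<in> R" using rs unfolding root_system_def by auto
lemma integ: "a \<in> R \<Longrightarrow> b \<in> R \<Longrightarrow> b \<bullet> coroot a \<in> \<int>" using rs unfolding root_system_def by auto
lemma reduced: "a \<in> R \<Longrightarrow> c *\<^sub>R a \<in> R \<Longrightarrow> c = 1 \<or> c = -1" using rs unfolding root_system_def by auto
lemma SR: "S \<subseteq> R" using sr unfolding simple_roots_def by auto
lemma indS: "independent S" using sr unfolding simple_roots_def by auto
lemma finS: "finite S" using indS finiteI_independent by auto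
lemma pos_or_neg: "a \<in> R \<Longrightarrow> nonneg_int_comb S a \<or> nonneg_int_comb S (- a)"
  using sr unfolding simple_roots_def by auto
lemma negR: "a \<in> R \<Longrightarrow> - a \<in> R" using reflR[of a a] refl_self[OF nz] by auto

lemma pos_neg_excl:
  assumes "a \<in> R" "nonneg_int_comb S a" "nonneg_int_comb S (- a)" shows False
proof -
  obtain c where c: "\<forall>s\<in>S. c s \<in> \<int> \<and> c s \<ge> 0" "a = (\<Sum>s\<in>S. c s *\<^sub>R s)"
    using assms(2) unfolding nonneg_int_comb_def by auto
  obtain d where d: "\<forall>s\<in>S. d s \<in> \<int> \<and> d s \<ge> 0" "- a = (\<Sum>s\<in>S. d s *\<^sub>R s)"
    using assms(3) unfolding nonneg_int_comb_def by auto
  have "(\<Sum>s\<in>S. (c s + d s) *\<^sub>R s) = a + - a"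
    by (simp add: scaleR_add_left sum.distrib c(2)[symmetric] d(2)[symmetric])
  then have "(\<Sum>s\<in>S. (c s + d s) *\<^sub>R s) = 0" by simp
  moreover have H: "\<And>cc. (\<Sum>v\<in>S. cc v *\<^sub>R v) = 0 \<Longrightarrow> \<forall>v\<in>S. cc v = 0"
    using indS independent_explicit by blast
  ultimately have "\<forall>s\<in>S. c s + d s = 0" using H[of "\<lambda>s. c s + d s"] by simp
  then have "\<forall>s\<in>S. c s = 0" using c(1) d(1) by force
  then have "a = 0" using c(2) by simp
  then show False using nz assms(1) by auto
qed

lemma simple_pos: "s \<in> S \<Longrightarrow> nonneg_int_comb S s"
  unfolding nonneg_int_comb_def
  by (rule exI[of _ "\<lambda>t. if t = s then 1 else 0"]) (simp add: sum_delta_scaleR finS)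

lemma key:
  assumes al: "al \<in> S" and b: "b \<in> R" "nonneg_int_comb S b" "b \<noteq> al"
  shows "nonneg_int_comb S (refl al b)" "refl al b \<noteq> al"
proof -
  have alR: "al \<in> R" using al SR by auto
  obtain c where c: "\<forall>s\<in>S. c s \<in> \<int> \<and> c s \<ge> 0" "b = (\<Sum>s\<in>S. c s *\<^sub>R s)"
    using b(2) unfolding nonneg_int_comb_def by auto
  have "\<exists>s0\<in>S. s0 \<noteq> al \<and> c s0 > 0"
  proof (rule ccontr)
    assume "\<not> ?thesis"
    then have z: "\<forall>s\<in>S. s \<noteq> al \<longrightarrow> c s = 0" using c(1) by force
    have "b = (\<Sum>s\<in>S. (if s = al then c al else 0) *\<^sub>R s)"
      unfolding c(2) by (rule sum.cong) (use z in auto)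
    also have "\<dots> = c al *\<^sub>R al" by (rule sum_delta_scaleR[OF finS al])
    finally have bb: "b = c al *\<^sub>R al" .
    then have "c al = 1 \<or> c al = -1" using reduced[OF alR] b(1) by auto
    then have "c al = 1" using c(1) al by force
    then show False using bb b(3) by simp
  qed
  then obtain s0 where s0: "s0 \<in> S" "s0 \<noteq> al" "c s0 > 0" by blast
  define n where "n = b \<bullet> coroot al"
  have e: "refl al b = (\<Sum>s\<in>S. (c s - (if s = al then n else 0)) *\<^sub>R s)"
    by (simp add: refl_def n_def scaleR_diff_left sum_subtractf sum_delta_scaleR[OF finS al] c(2)[symmetric])
  have rR: "refl al b \<in> R" using reflR[OF alR b(1)] .
  show "nonneg_int_comb S (refl al b)"
  proof (rule ccontr)
    assume nn: "\<not> nonneg_int_comb S (refl al b)"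
    then have "nonneg_int_comb S (- refl al b)" using pos_or_neg[OF rR] by auto
    then obtain d where d: "\<forall>s\<in>S. d s \<in> \<int> \<and> d s \<ge> 0" "- refl al b = (\<Sum>s\<in>S. d s *\<^sub>R s)"
      unfolding nonneg_int_comb_def by auto
    have "(\<Sum>s\<in>S. (c s - (if s = al then n else 0)) *\<^sub>R s) = (\<Sum>s\<in>S. (- d s) *\<^sub>R s)"
    proof -
      have "(\<Sum>s\<in>S. (- d s) *\<^sub>R s) = - (\<Sum>s\<in>S. d s *\<^sub>R s)" by (simp add: sum_negf)
      also have "\<dots> = refl al b" using d(2) by (metis minus_minus)
      finally have "(\<Sum>s\<in>S. (- d s) *\<^sub>R s) = refl al b" .
      then show ?thesis using e by simp
    qed
    from coef_unique[OF indS this s0(1)] have "c s0 = - d s0" using s0 by simp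
    then show False using d(1) s0 by force
  qed
  show "refl al b \<noteq> al"
  proof
    assume "refl al b = al"
    then have "b = - al" using refl_refl[OF nz[OF alR], of b] refl_self[OF nz[OF alR]] by metis
    then show False using pos_neg_excl[OF alR simple_pos[OF al]] b(2) by simp
  qed
qed


lemma finP: "finite (pos_roots R S)" using finR unfolding pos_roots_def by auto

lemma rho_coroot:
  assumes al: "al \<in> S" shows "rho R S \<bullet> coroot al = 1"
proof -
  have alR: "al \<in> R" using al SR by auto
  have a0: "al \<noteq> 0" using nz[OF alR] .
  define P where "P = pos_roots R S"
  define P' where "P' = P - {al}"
  define f where "f = (\<lambda>b. b \<bullet> coroot al)"
  have alP: "al \<in> P" using alR simple_pos[OF al] unfolding P_def pos_roots_def by auto
  have finP': "finite P'" using finP unfolding P'_def P_def by auto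
  have into: "refl al b \<in> P'" if "b \<in> P'" for b
    using that key[OF al] reflR[OF alR] unfolding P'_def P_def pos_roots_def by auto
  have img: "refl al ` P' = P'"
  proof
    show "refl al ` P' \<subseteq> P'" using into by auto
    show "P' \<subseteq> refl al ` P'"
    proof
      fix b assume "b \<in> P'"
      then show "b \<in> refl al ` P'" using into refl_refl[OF a0, of b] by (metis imageI)
    qed
  qed
  have inj: "inj_on (refl al) P'"
    by (rule inj_on_inverseI[where g = "refl al"]) (simp add: refl_refl[OF a0])
  have "sum f P' = sum f (refl al ` P')" using img by simp
  also have "\<dots> = sum (f \<circ> refl al) P'" by (rule sum.reindex[OF inj])
  also have "\<dots> = sum (\<lambda>b. - f b) P'" unfolding f_def by (simp add: refl_coroot[OF a0])
  also have "\<dots> = - sum f P'" by (simp add: sum_negf)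
  finally have s0: "sum f P' = 0" by simp
  have "sum f P = f al + sum f P'" unfolding P'_def using alP finP unfolding P_def
    by (simp add: sum.remove)
  then have "sum f P = 2" using s0 unfolding f_def by (simp add: self_coroot[OF a0])
  then show ?thesis unfolding rho_def P_def f_def
    by (simp add: inner_sum_left)
qed

lemma rho_simple_pos: "al \<in> S \<Longrightarrow> rho R S \<bullet> al > 0"
proof -
  assume al: "al \<in> S"
  then have a0: "al \<noteq> 0" using SR nz by auto
  have "1 = rho R S \<bullet> coroot al" using rho_coroot[OF al] by simp
  also have "\<dots> = 2 * (rho R S \<bullet> al) / (al \<bullet> al)" by (rule coroot_inner)
  finally have "rho R S \<bullet> al = (al \<bullet> al) / 2" using a0 by (simp add: field_simps)
  moreover have "al \<bullet> al > 0" using a0 by simp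
  ultimately show ?thesis by linarith
qed

lemma rho_nonneg: "nonneg_int_comb S x \<Longrightarrow> rho R S \<bullet> x \<ge> 0"
proof -
  assume "nonneg_int_comb S x"
  then obtain c where c: "\<forall>s\<in>S. c s \<in> \<int> \<and> c s \<ge> 0" "x = (\<Sum>s\<in>S. c s *\<^sub>R s)"
    unfolding nonneg_int_comb_def by auto
  have "rho R S \<bullet> x = (\<Sum>s\<in>S. c s * (rho R S \<bullet> s))" using c(2) by (simp add: inner_sum_right)
  also have "\<dots> \<ge> 0"
  proof (rule sum_nonneg)
    fix s assume "s \<in> S"
    then show "c s * (rho R S \<bullet> s) \<ge> 0" using c(1) rho_simple_pos[of s] by simp
  qed
  finally show ?thesis .
qed

lemma R_ne: "R \<noteq> {}"
proof
  assume "R = {}"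
  then have "span R = {0}" by simp
  moreover have "span R = UNIV" using rs unfolding root_system_def by auto
  moreover obtain b :: 'a where "b \<in> Basis" using nonempty_Basis by blast
  then have "b \<noteq> 0" by auto
  ultimately show False by auto
qed

lemma short_ex: "\<exists>g. short_root R g"
proof -
  define m where "m = Min ((\<lambda>b. b \<bullet> b) ` R)"
  have "m \<in> (\<lambda>b. b \<bullet> b) ` R" unfolding m_def using finR R_ne by (intro Min_in) auto
  then obtain g where g: "g \<in> R" "g \<bullet> g = m" by auto
  have "\<forall>b\<in>R. m \<le> b \<bullet> b" unfolding m_def using finR by auto
  then show ?thesis using g unfolding short_root_def by auto
qed

lemma short_norm: "short_root R g \<Longrightarrow> g \<bullet> g = 2" using nr unfolding normalized_roots_def by auto

lemma norm_ge2: "b \<in> R \<Longrightarrow> b \<bullet> b \<ge> 2"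
  using short_ex short_norm unfolding short_root_def by metis

lemma short_of_norm: "b \<in> R \<Longrightarrow> b \<bullet> b = 2 \<Longrightarrow> short_root R b"
  using norm_ge2 unfolding short_root_def by auto

lemma not_short: "b \<in> R \<Longrightarrow> \<not> short_root R b \<Longrightarrow> b \<bullet> b > 2"
  using norm_ge2[of b] short_of_norm[of b] by fastforce

lemma coroot_short: "short_root R g \<Longrightarrow> coroot g = g"
  using short_norm by (simp add: coroot_def)

lemma short_R: "short_root R g \<Longrightarrow> g \<in> R" unfolding short_root_def by auto

lemma short_neg: "short_root R g \<Longrightarrow> short_root R (- g)"
  using short_of_norm negR short_R short_norm by auto

lemma short_refl: "a \<in> R \<Longrightarrow> short_root R g \<Longrightarrow> short_root R (refl a g)"
  using short_of_norm reflR short_R short_norm refl_isom nz by metis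

lemma short_neighbor:
  assumes b: "b \<in> R" "\<not> short_root R b" shows "\<exists>g. short_root R g \<and> b \<bullet> g \<noteq> 0"
proof (rule ccontr)
  assume nb: "\<not> ?thesis"
  define L where "L = {c \<in> R. \<not> short_root R c \<and> (\<forall>g. short_root R g \<longrightarrow> c \<bullet> g = 0)}"
  have bL: "b \<in> L" using nb b unfolding L_def by auto
  have orth: "\<forall>a\<in>L. \<forall>c\<in>R - L. a \<bullet> c = 0"
  proof (intro ballI)
    fix a c assume a: "a \<in> L" and c: "c \<in> R - L"
    show "a \<bullet> c = 0"
    proof (cases "short_root R c")
      case True then show ?thesis using a unfolding L_def by auto
    next
      case False
      then obtain g where g: "short_root R g" "c \<bullet> g \<noteq> 0" using c unfolding L_def by auto
      show ?thesis
      proof (rule ccontr)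
        assume ac: "a \<bullet> c \<noteq> 0"
        have cR: "c \<in> R" using c by auto
        have c0: "c \<noteq> 0" using nz cR by auto
        have sg: "short_root R (refl c g)" using short_refl[OF cR g(1)] .
        have ag: "a \<bullet> g = 0" using a g(1) unfolding L_def by auto
        have "a \<bullet> refl c g = - (g \<bullet> coroot c) * (a \<bullet> c)"
          using ag by (simp add: refl_def inner_diff_right)
        moreover have "g \<bullet> coroot c \<noteq> 0" using g(2) c0 by (simp add: coroot_inner inner_commute)
        ultimately have "a \<bullet> refl c g \<noteq> 0" using ac by simp
        then show False using a sg unfolding L_def by auto
      qed
    qed
  qed
  have "L \<subseteq> R" unfolding L_def by auto
  moreover have "L \<noteq> {}" using bL by auto
  moreover have "L \<noteq> R" using short_ex short_R unfolding L_def by auto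
  ultimately show False using irr orth unfolding irreducible_root_system_def by blast
qed


lemma bound_short:
  assumes hs: "highest_short_root R S a0" and g: "short_root R g"
  shows "rho R S \<bullet> g \<le> rho R S \<bullet> a0" "- (rho R S \<bullet> a0) \<le> rho R S \<bullet> g"
proof -
  have "rho R S \<bullet> (a0 - g) \<ge> 0" using hs g rho_nonneg unfolding highest_short_root_def by blast
  then show "rho R S \<bullet> g \<le> rho R S \<bullet> a0" by (simp add: inner_diff_right)
  have "rho R S \<bullet> (a0 - - g) \<ge> 0" using hs short_neg[OF g] rho_nonneg unfolding highest_short_root_def by blast
  then show "- (rho R S \<bullet> a0) \<le> rho R S \<bullet> g" by (simp add: inner_add_right)
qed

lemma bound:
  assumes hs: "highest_short_root R S a0" and b: "b \<in> R"
  shows "rho R S \<bullet> coroot b \<le> rho R S \<bullet> a0"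
proof (cases "short_root R b")
  case True then show ?thesis using bound_short[OF hs True] coroot_short by simp
next
  case False
  define M where "M = rho R S \<bullet> a0"
  obtain g where g: "short_root R g" "b \<bullet> g \<noteq> 0" using short_neighbor[OF b False] by blast
  have gR: "g \<in> R" using short_R[OF g(1)] .
  have b0: "b \<noteq> 0" using nz b by auto
  have bb: "b \<bullet> b > 2" using not_short[OF b False] .
  define m where "m = b \<bullet> g"
  define n where "n = g \<bullet> coroot b"
  have mZ: "m \<in> \<int>" using integ[OF gR b] coroot_short[OF g(1)] unfolding m_def by simp
  have nZ: "n \<in> \<int>" using integ[OF b gR] unfolding n_def .
  have m0: "m \<noteq> 0" using g(2) unfolding m_def .
  have nm: "n = 2 * m / (b \<bullet> b)" unfolding n_def m_def by (simp add: coroot_inner inner_commute)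
  have n0: "n \<noteq> 0" using nm m0 bb b0 by simp
  have m2: "\<bar>m\<bar> \<ge> 2"
  proof (rule ccontr)
    assume "\<not> \<bar>m\<bar> \<ge> 2"
    then have "\<bar>m\<bar> < 2" by simp
    obtain k :: int where k: "m = of_int k" using mZ Ints_cases by blast
    have "k \<noteq> 0" using m0 k by simp
    moreover have "\<bar>k\<bar> < 2" using \<open>\<bar>m\<bar> < 2\<close> k by linarith
    ultimately have "\<bar>k\<bar> = 1" by arith
    then have "\<bar>m\<bar> = 1" using k by (metis of_int_abs of_int_1)
    then have "\<bar>n\<bar> = 2 / (b \<bullet> b)" using nm bb by (simp add: abs_div abs_mult)
    moreover have "2 / (b \<bullet> b) < 1" using bb by (simp add: divide_less_eq)
    ultimately have "\<bar>n\<bar> < 1" by simp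
    moreover obtain j :: int where j: "n = of_int j" using nZ Ints_cases by blast
    ultimately have "j = 0" by linarith
    then show False using n0 j by simp
  qed
  define d where "d = refl b g"
  have sd: "short_root R d" using short_refl[OF b g(1)] unfolding d_def .
  have "d = g - n *\<^sub>R b" unfolding d_def n_def refl_def ..
  then have nrb: "n * (rho R S \<bullet> b) = rho R S \<bullet> g - rho R S \<bullet> d" by (simp add: inner_diff_right)
  have "rho R S \<bullet> coroot b = 2 * (rho R S \<bullet> b) / (b \<bullet> b)" by (rule coroot_inner)
  also have "\<dots> = n * (rho R S \<bullet> b) / m" using nm bb m0 by (simp add: field_simps)
  also have "\<dots> = (rho R S \<bullet> g - rho R S \<bullet> d) / m" using nrb by simp
  finally have e: "rho R S \<bullet> coroot b = (rho R S \<bullet> g - rho R S \<bullet> d) / m" .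
  have x: "\<bar>rho R S \<bullet> g - rho R S \<bullet> d\<bar> \<le> 2 * M"
    using bound_short[OF hs g(1)] bound_short[OF hs sd] unfolding M_def by linarith
  have "\<bar>(rho R S \<bullet> g - rho R S \<bullet> d) / m\<bar> = \<bar>rho R S \<bullet> g - rho R S \<bullet> d\<bar> / \<bar>m\<bar>" by (simp add: abs_div)
  also have "\<dots> \<le> (2 * M) / 2"
    using x m2 by (intro frac_le) auto
  finally have "\<bar>(rho R S \<bullet> g - rho R S \<bullet> d) / m\<bar> \<le> M" by (simp add: abs_div)
  then show ?thesis using e unfolding M_def by linarith
qed

end

theorem proposition2p2p2:
  fixes R S :: "'a::euclidean_space set" and a0 :: 'a and w :: "'a \<Rightarrow> 'a"
  assumes "irreducible_root_system R"
    and "simple_roots R S"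
    and "normalized_roots R"
    and "highest_short_root R S a0"
    and "w \<in> weyl_group R"
  shows "dot_action R S w 0 \<bullet> coroot a0 \<ge> - 2 * (coxeter_number R S a0 - 1)
     \<and> (\<forall>a\<in>S. dot_action R S w 0 \<bullet> coroot a \<le> coxeter_number R S a0 - 2)"
proof -
  interpret RS R S using assms(1-3) by unfold_locales
  let ?r = "rho R S"
  have hs: "short_root R a0" using assms(4) unfolding highest_short_root_def by auto
  have ca0: "coroot a0 = a0" using coroot_short[OF hs] .
  have adj: "\<forall>y\<in>R. \<exists>z\<in>R. z \<bullet> z = y \<bullet> y \<and> (\<forall>x. w x \<bullet> y = x \<bullet> z)"
    using weyl_adj[OF rs assms(5)] .
  have dot: "dot_action R S w 0 = w ?r - ?r" unfolding dot_action_def by simp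
  have h: "coxeter_number R S a0 = ?r \<bullet> a0 + 1" unfolding coxeter_number_def ca0 ..
  obtain z where z: "z \<in> R" "z \<bullet> z = a0 \<bullet> a0" "\<forall>x. w x \<bullet> a0 = x \<bullet> z"
    using adj short_R[OF hs] by blast
  have sz: "short_root R z" using short_of_norm[OF z(1)] z(2) short_norm[OF hs] by simp
  have A: "dot_action R S w 0 \<bullet> coroot a0 \<ge> - 2 * (coxeter_number R S a0 - 1)"
    using bound_short(2)[OF assms(4) sz] z(3) unfolding dot ca0 h by (simp add: inner_diff_left)
  have B: "dot_action R S w 0 \<bullet> coroot a \<le> coxeter_number R S a0 - 2" if a: "a \<in> S" for a
  proof -
    have aR: "a \<in> R" using a SR by auto
    obtain y where y: "y \<in> R" "y \<bullet> y = a \<bullet> a" "\<forall>x. w x \<bullet> a = x \<bullet> y"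
      using adj aR by blast
    have "w ?r \<bullet> coroot a = ?r \<bullet> coroot y"
      using y(2,3) by (simp add: coroot_def)
    then have "w ?r \<bullet> coroot a \<le> ?r \<bullet> a0" using bound[OF assms(4) y(1)] by simp
    then show ?thesis using rho_coroot[OF a] unfolding dot h by (simp add: inner_diff_left)
  qed
  show ?thesis using A B by blast
qed

end
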